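(* Let $\mathcal{D}$ be a set with at least three elements. For every $x\in\mathcal{D}$ and every function $a_x:\mathcal{D}\setminus\{x\}\to\{\mathtt{match},\mathtt{switch}\}$, there exists $x'\in\mathcal{D}$ such that $$W(\theta,x',\mathtt{switch})\geq W(\theta,x,a_x(d_\theta(x)))$$ for all $\theta\in\mathcal{D}$ and all admissible functions $d_\theta$. That is, the class of always-switching strategies $(x',\mathtt{switch})$ is weakly dominant.
   Context: A strategy is a pair $(x,a_x)$ where $x\in\mathcal{D}$ and $a_x$ is a function on $\mathcal{D}\setminus\{x\}$ with values in $\{\mathtt{match},\mathtt{switch}\}$. The always-switching strategy $(x,\mathtt{switch})$ is the one with $a_x$ constantly equal to $\mathtt{switch}$. For each $\theta\in\mathcal{D}$, a function $d_\theta:\mathcal{D}\to\mathcal{D}$ is called admissible if $d_\theta(x)=\theta$ whenever $x\neq\theta$, and $d_\theta(\theta)\neq\theta$. The payoff function is $W(\theta,x,\mathtt{match})=1(x=\theta)$ and $W(\theta,x,\mathtt{switch})=1(x\neq\theta)$, where $1(\cdot)$ denotes the indicator. A strategy $(x,a_x)$ receives the payoff $W(\theta,x,a_x(d_\theta(x)))$ when the parameters are $\theta$ and $d_\theta$. *)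

theory Defs
  imports Main
begin

datatype action = match | switch

definition W :: "'a \<Rightarrow> 'a \<Rightarrow> action \<Rightarrow> nat" where
  "W \<theta> x act = (case act of match \<Rightarrow> (if x = \<theta> then 1 else 0)
                              | switch \<Rightarrow> (if x \<noteq> \<theta> then 1 else 0))"

definition admissible :: "'a set \<Rightarrow> 'a \<Rightarrow> ('a \<Rightarrow> 'a) \<Rightarrow> bool" where
  "admissible D \<theta> d \<longleftrightarrow> (\<forall>y\<in>D. d y \<in> D) \<and> (\<forall>x\<in>D. x \<noteq> \<theta> \<longrightarrow> d x = \<theta>) \<and> d \<theta> \<noteq> \<theta>"

end

theory Submission
  imports Defs
begin

theorem mainTheorem1:
  fixes D :: "'a set" and x :: 'a and a :: "'a \<Rightarrow> action"
  assumes "\<exists>p q r. p \<in> D \<and> q \<in> D \<and> r \<in> D \<and> p \<noteq> q \<and> q \<noteq> r \<and> p \<noteq> r"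
    and "x \<in> D"
  shows "\<exists>x'\<in>D. \<forall>\<theta>\<in>D. \<forall>d. admissible D \<theta> d \<longrightarrow>
           W \<theta> x' switch \<ge> W \<theta> x (a (d x))"
proof (cases "\<exists>y\<in>D. y \<noteq> x \<and> a y = match")
  case True
  then obtain y where y: "y \<in> D" "y \<noteq> x" "a y = match" by blast
  show ?thesis
  proof (intro bexI[OF _ y(1)] ballI allI impI)
    fix \<theta> d assume th: "\<theta> \<in> D" and ad: "admissible D \<theta> d"
    show "W \<theta> y switch \<ge> W \<theta> x (a (d x))"
    proof (cases "\<theta> = y")
      case True
      then have "d x = y" using ad assms(2) y(2) unfolding admissible_def by auto
      then show ?thesis using True y by (simp add: W_def)
    next
      case False
      then show ?thesis by (auto simp: W_def split: action.splits)
    qed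
  qed
next
  case False
  show ?thesis
  proof (intro bexI[OF _ assms(2)] ballI allI impI)
    fix \<theta> d assume th: "\<theta> \<in> D" and ad: "admissible D \<theta> d"
    show "W \<theta> x switch \<ge> W \<theta> x (a (d x))"
    proof (cases "\<theta> = x")
      case True
      then have "d x \<in> D" "d x \<noteq> x" using ad assms(2) unfolding admissible_def by auto
      then have "a (d x) = switch" using False by (cases "a (d x)") auto
      then show ?thesis using True by (simp add: W_def)
    next
      case False
      then show ?thesis by (auto simp: W_def split: action.splits)
    qed
  qed
qed

end
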